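(* Let $\Theta$ be a parameter set, where each $\theta\in\Theta$ determines a probability distribution $p_\theta$ over trajectories, and write $KL(\theta'\|\theta):=KL(p_{\theta'}\|p_\theta)$. Let $C:\Theta\to\mathbb{R}$ be a cost function, and for $\alpha>0$ let $J^{\alpha}(\theta)=\inf_{\theta'}\big(\alpha KL(\theta'\|\theta)+C(\theta')\big)$. For a step size $\mathcal{E}>0$ define the direct update $\Theta^{C}_{\mathcal{E}}(\theta)=\operatorname{argmin}_{\theta':\,KL(\theta'\|\theta)\le\mathcal{E}} C(\theta')$, the smoothed update $R^{J^\alpha}_{\mathcal{E}}(\theta)=\operatorname{argmin}_{\theta':\,KL(\theta'\|\theta)\le\mathcal{E}} J^{\alpha}(\theta')$, and the optimal two-step cost $$C^*_{\mathcal{E},\mathcal{E}'}(\theta)=\min_{\theta':\,KL(\theta'\|\theta)\le\mathcal{E}}\ \min_{\theta'':\,KL(\theta''\|\theta')\le\mathcal{E}'} C(\theta'')=\min_{\theta':\,KL(\theta'\|\theta)\le\mathcal{E}} C\big(\Theta^{C}_{\mathcal{E}'}(\theta')\big).$$ Then: (1) For every $\theta$, every $\mathcal{E}>0$ and every $\alpha>0$ there exists $\mathcal{E}'=\mathcal{E}'_\alpha(\theta)$ (depending on $\theta$ and $\alpha$) such that, setting $\Theta'=R^{J^\alpha}_{\mathcal{E}}(\theta)$ and $\Theta''=\Theta^{C}_{\mathcal{E}'}(\Theta')$, one has $C(\Theta'')=C^*_{\mathcal{E},\mathcal{E}'}(\theta)$; i.e. a smoothed update with step size $\mathcal{E}$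 followed by a direct update with step size $\mathcal{E}'$ is an optimal two-step update. (2) The step size $\mathcal{E}'_\alpha(\theta)$ in (1) is monotonically decreasing (non-increasing) as a function of $\alpha$.
   Context: All minima, infima and argmins appearing above are assumed to be attained (the paper treats them as well-defined minimizers). The quantity $KL(\theta'\|\theta)$ is the Kullback–Leibler divergence between the trajectory distributions induced by the parameters $\theta'$ and $\theta$, and is nonnegative with $KL(\theta\|\theta)=0$. *)

theory Defs
  imports Complex_Main
begin

text \<open>Parameters live in an abstract type 'p. The divergence is given as an abstract
function KL, where KL t' t stands for KL(t' || t) = KL(p_t' || p_t).\<close>

definition is_min_on :: "('p \<Rightarrow> real) \<Rightarrow> 'p set \<Rightarrow> 'p \<Rightarrow> bool" where
  "is_min_on f S x \<longleftrightarrow> x \<in> S \<and> (\<forall>y\<in>S. f x \<le> f y)"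

definition KL_ball :: "('p \<Rightarrow> 'p \<Rightarrow> real) \<Rightarrow> real \<Rightarrow> 'p \<Rightarrow> 'p set" where
  "KL_ball KL r t = {t'. KL t' t \<le> r}"

definition Jsmooth :: "('p \<Rightarrow> 'p \<Rightarrow> real) \<Rightarrow> ('p \<Rightarrow> real) \<Rightarrow> real \<Rightarrow> 'p \<Rightarrow> real" where
  "Jsmooth KL C \<alpha> t = (INF t'. \<alpha> * KL t' t + C t')"

text \<open>Optimal value of a direct update: min of C over the KL ball of radius r around t.\<close>
definition ball_min :: "('p \<Rightarrow> 'p \<Rightarrow> real) \<Rightarrow> ('p \<Rightarrow> real) \<Rightarrow> real \<Rightarrow> 'p \<Rightarrow> real" where
  "ball_min KL C r t = (INF t'' \<in> KL_ball KL r t. C t'')"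

definition Cstar :: "('p \<Rightarrow> 'p \<Rightarrow> real) \<Rightarrow> ('p \<Rightarrow> real) \<Rightarrow> real \<Rightarrow> real \<Rightarrow> 'p \<Rightarrow> real" where
  "Cstar KL C E E' t = (INF t' \<in> KL_ball KL E t. ball_min KL C E' t')"

end

theory Submission
  imports Defs
begin

lemma min_INF: "is_min_on f S x \<Longrightarrow> (INF y\<in>S. f y) = (f x :: real)"
  unfolding is_min_on_def by (intro cInf_eq_minimum) auto

theorem theorem1:
  fixes KL :: "'p \<Rightarrow> 'p \<Rightarrow> real" and C :: "'p \<Rightarrow> real"
  assumes KL_nonneg: "\<And>t' t. KL t' t \<ge> 0"
    and KL_self: "\<And>t. KL t t = 0"
    \<comment> \<open>all minima/infima are attained\<close>
    and J_attained: "\<And>\<alpha> t. \<alpha> > 0 \<Longrightarrow> \<exists>t'. is_min_on (\<lambda>s. \<alpha> * KL s t + C s) UNIV t'"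
    and C_attained: "\<And>r t. r \<ge> 0 \<Longrightarrow> \<exists>t''. is_min_on C (KL_ball KL r t) t''"
    and JC_attained: "\<And>\<alpha> r t. \<alpha> > 0 \<Longrightarrow> r > 0 \<Longrightarrow>
                        \<exists>t'. is_min_on (Jsmooth KL C \<alpha>) (KL_ball KL r t) t'"
    and Cstar_attained: "\<And>r r' t. r > 0 \<Longrightarrow> r' \<ge> 0 \<Longrightarrow>
                        \<exists>t'. is_min_on (ball_min KL C r') (KL_ball KL r t) t'"
  assumes E_pos: "E > 0"
    \<comment> \<open>R \<alpha> is the smoothed update R^{J^\<alpha>}_E(\<theta>) (a chosen minimizer, for each \<alpha> > 0)\<close>
    and R_min: "\<And>\<alpha>. \<alpha> > 0 \<Longrightarrow> is_min_on (Jsmooth KL C \<alpha>) (KL_ball KL E \<theta>) (R \<alpha>)"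
  shows "\<exists>E' :: real \<Rightarrow> real.
           (\<forall>\<alpha>>0. E' \<alpha> \<ge> 0 \<and>
              (\<forall>\<theta>''. is_min_on C (KL_ball KL (E' \<alpha>) (R \<alpha>)) \<theta>'' \<longrightarrow>
                  C \<theta>'' = Cstar KL C E (E' \<alpha>) \<theta>)) \<and>
           (\<forall>\<alpha> \<beta>. 0 < \<alpha> \<longrightarrow> \<alpha> \<le> \<beta> \<longrightarrow> E' \<beta> \<le> E' \<alpha>)"
proof -
  define s where "s = (\<lambda>\<alpha>. SOME s. is_min_on (\<lambda>x. \<alpha> * KL x (R \<alpha>) + C x) UNIV s)"
  define e where "e = (\<lambda>\<alpha>. KL (s \<alpha>) (R \<alpha>))"
  have s_min: "is_min_on (\<lambda>x. \<alpha> * KL x (R \<alpha>) + C x) UNIV (s \<alpha>)" if "\<alpha> > 0" for \<alpha>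
    unfolding s_def using J_attained[OF that] by (rule someI_ex)
  have J_le: "Jsmooth KL C \<alpha> t \<le> \<alpha> * KL x t + C x" if apos: "\<alpha> > 0" for \<alpha> t x
  proof -
    obtain m where m: "is_min_on (\<lambda>s. \<alpha> * KL s t + C s) UNIV m" using J_attained[OF apos] by blast
    have "Jsmooth KL C \<alpha> t = \<alpha> * KL m t + C m" unfolding Jsmooth_def using min_INF[OF m] by simp
    also have "\<dots> \<le> \<alpha> * KL x t + C x" using m unfolding is_min_on_def by blast
    finally show ?thesis .
  qed
  have JR: "Jsmooth KL C \<alpha> (R \<alpha>) = \<alpha> * e \<alpha> + C (s \<alpha>)" if "\<alpha> > 0" for \<alpha>
    unfolding Jsmooth_def e_def using min_INF[OF s_min[OF that]] by simp
  have key: "\<alpha> * e \<alpha> + C (s \<alpha>) \<le> \<alpha> * r + Cstar KL C E r \<theta>" if a0: "\<alpha> > 0" and r0: "r \<ge> 0" for \<alpha> r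
  proof -
    obtain t' where t': "is_min_on (ball_min KL C r) (KL_ball KL E \<theta>) t'"
      using Cstar_attained[OF E_pos r0] by blast
    have cs: "Cstar KL C E r \<theta> = ball_min KL C r t'" unfolding Cstar_def using min_INF[OF t'] .
    obtain u where u: "is_min_on C (KL_ball KL r t') u" using C_attained[OF r0] by blast
    have bm: "ball_min KL C r t' = C u" unfolding ball_min_def using min_INF[OF u] .
    have ku: "KL u t' \<le> r" using u unfolding is_min_on_def KL_ball_def by simp
    have "\<alpha> * e \<alpha> + C (s \<alpha>) = Jsmooth KL C \<alpha> (R \<alpha>)" using JR[OF a0] by simp
    also have "\<dots> \<le> Jsmooth KL C \<alpha> t'" using R_min[OF a0] t' unfolding is_min_on_def by blast
    also have "\<dots> \<le> \<alpha> * KL u t' + C u" by (rule J_le[OF a0])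
    also have "\<dots> \<le> \<alpha> * r + C u" using ku a0 by simp
    finally show ?thesis using cs bm by simp
  qed
  have phi: "Cstar KL C E (e \<alpha>) \<theta> \<le> C (s \<alpha>)" if a0: "\<alpha> > 0" for \<alpha>
  proof -
    have "Cstar KL C E (e \<alpha>) \<theta> \<le> ball_min KL C (e \<alpha>) (R \<alpha>)"
    proof -
      obtain t' where t': "is_min_on (ball_min KL C (e \<alpha>)) (KL_ball KL E \<theta>) t'"
        using Cstar_attained[OF E_pos KL_nonneg[of "s \<alpha>" "R \<alpha>"]] unfolding e_def by blast
      show ?thesis unfolding Cstar_def min_INF[OF t'] using t' R_min[OF a0]
        unfolding is_min_on_def by blast
    qed
    also have "\<dots> \<le> C (s \<alpha>)"
    proof -
      obtain u where u: "is_min_on C (KL_ball KL (e \<alpha>) (R \<alpha>)) u"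
        using C_attained[OF KL_nonneg[of "s \<alpha>" "R \<alpha>"]] unfolding e_def by blast
      show ?thesis unfolding ball_min_def min_INF[OF u] using u
        unfolding is_min_on_def KL_ball_def e_def by auto
    qed
    finally show ?thesis .
  qed
  show ?thesis
  proof (intro exI[of _ e] conjI allI impI)
    fix \<alpha> :: real assume a: "\<alpha> > 0"
    show "e \<alpha> \<ge> 0" unfolding e_def by (rule KL_nonneg)
    fix t assume t: "is_min_on C (KL_ball KL (e \<alpha>) (R \<alpha>)) t"
    have "C t \<le> C (s \<alpha>)" using t unfolding is_min_on_def KL_ball_def e_def by auto
    moreover have "C (s \<alpha>) \<le> Cstar KL C E (e \<alpha>) \<theta>" using key[OF a, of "e \<alpha>"] KL_nonneg
      unfolding e_def by simp
    moreover have "Cstar KL C E (e \<alpha>) \<theta> \<le> C t"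
    proof -
      obtain t' where t': "is_min_on (ball_min KL C (e \<alpha>)) (KL_ball KL E \<theta>) t'"
        using Cstar_attained[OF E_pos KL_nonneg[of "s \<alpha>" "R \<alpha>"]] unfolding e_def by blast
      have "Cstar KL C E (e \<alpha>) \<theta> \<le> ball_min KL C (e \<alpha>) (R \<alpha>)"
        unfolding Cstar_def min_INF[OF t'] using t' R_min[OF a] unfolding is_min_on_def by blast
      also have "\<dots> = C t" unfolding ball_min_def min_INF[OF t] ..
      finally show ?thesis .
    qed
    ultimately show "C t = Cstar KL C E (e \<alpha>) \<theta>" by linarith
  next
    fix \<alpha> \<beta> :: real assume a: "0 < \<alpha>" "\<alpha> \<le> \<beta>"
    have b: "\<beta> > 0" using a by simp
    have ea: "e \<alpha> \<ge> 0" "e \<beta> \<ge> 0" unfolding e_def by (rule KL_nonneg)+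
    have 1: "\<alpha> * e \<alpha> + Cstar KL C E (e \<alpha>) \<theta> \<le> \<alpha> * e \<beta> + Cstar KL C E (e \<beta>) \<theta>"
      using key[OF a(1) ea(2)] phi[OF a(1)] by linarith
    have 2: "\<beta> * e \<beta> + Cstar KL C E (e \<beta>) \<theta> \<le> \<beta> * e \<alpha> + Cstar KL C E (e \<alpha>) \<theta>"
      using key[OF b ea(1)] phi[OF b] by linarith
    have "(\<beta> - \<alpha>) * (e \<beta> - e \<alpha>) \<le> 0" using 1 2 by (simp add: algebra_simps)
    show "e \<beta> \<le> e \<alpha>"
    proof (cases "\<alpha> = \<beta>")
      case False
      hence "\<beta> - \<alpha> > 0" using a by simp
      with \<open>(\<beta> - \<alpha>) * (e \<beta> - e \<alpha>) \<le> 0\<close> show ?thesis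
        by (simp add: mult_le_0_iff)
    qed simp
  qed
qed

end
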